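(* Let $W:\mathbb{N}\to\mathbb{R}$ be increasing with $W(N)\to\infty$, and let $(x_n)_{n\in\mathbb{N}}$ be a bounded complex sequence. Suppose $L=\lim_{N\to\infty}\frac{W(N-1)}{W(N)}$ exists and $L\in(0,1)$. For $n\ge0$ let $\lambda_n=L^n-L^{n+1}$. Then \[ \frac{1}{W(N)}\sum_{n=1}^{N}\Delta W(n)\,x_n=\sum_{k=0}^{N}\lambda_k x_{N-k}+o(1)\qquad (N\to\infty), \] where $\Delta W(n)=W(n)-W(n-1)$.
   Context: $\mathbb{N}=\{0,1,2,\dots\}$. The left side is the $N$-th $W$-weighted average $\mathbb{E}^W_{n\le N}x_n$ (defined for $N$ large enough that $W(N)\neq 0$). *)

theory Defs
  imports "HOL-Analysis.Analysis"
begin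

end

theory Submission imports Defs "HOL-Analysis.Analysis" begin

lemma ratio_pow:
  fixes W :: "nat \<Rightarrow> real"
  assumes Wtop: "filterlim W at_top sequentially"
    and r: "(\<lambda>N. W (N - 1) / W N) \<longlonglongrightarrow> L"
  shows "(\<lambda>N. W (N - j) / W N) \<longlonglongrightarrow> L ^ j"
proof (induction j)
  have pos: "eventually (\<lambda>N. 0 < W N) sequentially"
    using Wtop filterlim_at_top_dense by blast
  case 0
  have "eventually (\<lambda>N. W (N - 0) / W N = 1) sequentially"
    using pos by eventually_elim simp
  then show ?case using tendsto_eventually by fastforce
next
  case (Suc j)
  have pos: "eventually (\<lambda>N. 0 < W N) sequentially"
    using Wtop filterlim_at_top_dense by blast
  then obtain N0 where N0: "\<And>N. N \<ge> N0 \<Longrightarrow> 0 < W N"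
    unfolding eventually_sequentially by blast
  have r': "(\<lambda>N. W (N - j - 1) / W (N - j)) \<longlonglongrightarrow> L"
    using filterlim_compose[OF r filterlim_minus_const_nat_at_top[of j]] by (simp add: o_def)
  have eq: "eventually (\<lambda>N. W (N - j - 1) / W (N - j) * (W (N - j) / W N) = W (N - Suc j) / W N) sequentially"
    unfolding eventually_sequentially
  proof (intro exI allI impI)
    fix N assume "N \<ge> N0 + j"
    then have "W (N - j) > 0" using N0 by auto
    then show "W (N - j - 1) / W (N - j) * (W (N - j) / W N) = W (N - Suc j) / W N"
      by (simp add: field_simps)
  qed
  have "(\<lambda>N. W (N - j - 1) / W (N - j) * (W (N - j) / W N)) \<longlonglongrightarrow> L * L ^ j"
    by (rule tendsto_mult[OF r' Suc])
  then show ?case using tendsto_cong[OF eq] by simp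
qed
lemma reidx:
  fixes f :: "nat \<Rightarrow> 'a::comm_monoid_add"
  shows "(\<Sum>n=1..N. f n) = (\<Sum>k<N. f (N - k))"
  by (rule sum.reindex_bij_witness[where i="\<lambda>n. N - n" and j="\<lambda>k. N - k"]) auto

lemma tail_bound:
  fixes W :: "nat \<Rightarrow> real"
  assumes mono: "mono W" and KN: "K \<le> N" and WN: "W N > 0" and L0: "0 < L" and L1: "L < 1"
  shows "(\<Sum>k<N. \<bar>(W (N - k) - W (N - Suc k)) / W N - (L ^ k - L ^ (k + 1))\<bar>) + (L ^ N - L ^ (N + 1))
     \<le> (\<Sum>k<K. \<bar>(W (N - k) - W (N - Suc k)) / W N - (L ^ k - L ^ (k + 1))\<bar>)
        + (W (N - K) - W 0) / W N + L ^ K"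
proof -
  define c where "c k = (W (N - k) - W (N - Suc k)) / W N" for k
  define lam where "lam k = L ^ k - L ^ (k + 1)" for k
  have c0: "c k \<ge> 0" for k
    unfolding c_def using WN mono by (auto intro!: divide_nonneg_pos simp: mono_def)
  have l0: "lam k \<ge> 0" for k
    unfolding lam_def using L0 L1 by (simp add: power_decreasing)
  have split: "{..<N} = {..<K} \<union> {K..<N}" using KN by auto
  have s1: "(\<Sum>k<N. \<bar>c k - lam k\<bar>) = (\<Sum>k<K. \<bar>c k - lam k\<bar>) + (\<Sum>k=K..<N. \<bar>c k - lam k\<bar>)"
    unfolding split by (subst sum.union_disjoint) auto
  have s2: "(\<Sum>k=K..<N. \<bar>c k - lam k\<bar>) \<le> (\<Sum>k=K..<N. c k) + (\<Sum>k=K..<N. lam k)"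
    unfolding sum.distrib[symmetric] by (rule sum_mono) (smt (verit) c0 l0)
  have tel: "(\<Sum>k=K..<N. W (N - k) - W (N - Suc k)) = W (N - K) - W 0"
    using sum_Suc_diff'[OF KN, of "\<lambda>i. - W (N - i)"] by simp
  have s3: "(\<Sum>k=K..<N. c k) = (W (N - K) - W 0) / W N"
    unfolding c_def sum_divide_distrib[symmetric] tel ..
  have tel2: "(\<Sum>k=K..<Suc N. lam k) = L ^ K - L ^ Suc N"
    using sum_Suc_diff'[of K "Suc N" "\<lambda>i. - (L ^ i)"] KN unfolding lam_def by simp
  have s4: "(\<Sum>k=K..<N. lam k) + lam N \<le> L ^ K"
    using tel2 KN L0 by simp
  show ?thesis
    using s1 s2 s3 s4 unfolding c_def lam_def by linarith
qed
lemma E_lim: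
  fixes W :: "nat \<Rightarrow> real"
  assumes mono: "mono W" and Wtop: "filterlim W at_top sequentially"
    and r: "(\<lambda>N. W (N - 1) / W N) \<longlonglongrightarrow> L" and L0: "0 < L" and L1: "L < 1"
  shows "(\<lambda>N. (\<Sum>k<N. \<bar>(W (N - k) - W (N - Suc k)) / W N - (L ^ k - L ^ (k + 1))\<bar>) + (L ^ N - L ^ (N + 1)))
     \<longlonglongrightarrow> 0"
proof -
  define c where "c N k = (W (N - k) - W (N - Suc k)) / W N" for N k
  define lam where "lam k = L ^ k - L ^ (k + 1)" for k
  define E where "E N = (\<Sum>k<N. \<bar>c N k - lam k\<bar>) + lam N" for N
  have pos: "eventually (\<lambda>N. 0 < W N) sequentially"
    using Wtop filterlim_at_top_dense by blast
  have clim: "(\<lambda>N. c N k) \<longlonglongrightarrow> lam k" for k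
  proof -
    have "(\<lambda>N. W (N - k) / W N - W (N - Suc k) / W N) \<longlonglongrightarrow> L ^ k - L ^ Suc k"
      by (intro tendsto_diff ratio_pow[OF Wtop r])
    then show ?thesis unfolding c_def lam_def diff_divide_distrib by simp
  qed
  have l0: "lam k \<ge> 0" for k
    unfolding lam_def using L0 L1 by (simp add: power_decreasing)
  have E0: "E N \<ge> 0" for N unfolding E_def using l0 by (simp add: sum_nonneg)
  have "(E \<longlongrightarrow> 0) sequentially"
    unfolding tendsto_iff
  proof (intro allI impI)
    fix e :: real assume e: "e > 0"
    obtain K where K: "L ^ K < e / 4" using real_arch_pow_inv[of "e/4" L] e L1 by auto
    define g where "g N = (\<Sum>k<K. \<bar>c N k - lam k\<bar>) + (W (N - K) - W 0) / W N + L ^ K" for N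
    have w0: "(\<lambda>N. W 0 / W N) \<longlonglongrightarrow> 0"
      by (rule tendsto_divide_0[OF tendsto_const filterlim_at_top_imp_at_infinity[OF Wtop]])
    have "g \<longlonglongrightarrow> (\<Sum>k<K. \<bar>lam k - lam k\<bar>) + (L ^ K - 0) + L ^ K"
      unfolding g_def diff_divide_distrib
      by (intro tendsto_add tendsto_sum tendsto_rabs tendsto_diff clim tendsto_const ratio_pow[OF Wtop r] w0)
    then have "g \<longlonglongrightarrow> 2 * L ^ K" by simp
    then have ev1: "eventually (\<lambda>N. g N < 2 * L ^ K + e / 2) sequentially"
      using e by (intro order_tendstoD) auto
    have ev2: "eventually (\<lambda>N. E N \<le> g N) sequentially"
      using pos eventually_ge_at_top[of K]
    proof eventually_elim
      case (elim N)
      then show ?case unfolding E_def g_def c_def lam_def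
        using tail_bound[OF mono _ _ L0 L1, of K N] by simp
    qed
    show "eventually (\<lambda>N. dist (E N) 0 < e) sequentially"
      using ev1 ev2
    proof eventually_elim
      case (elim N)
      then show ?case using E0[of N] K by simp
    qed
  qed
  then show ?thesis unfolding E_def c_def lam_def .
qed

theorem mainTheorem8:
  fixes W :: "nat \<Rightarrow> real" and x :: "nat \<Rightarrow> complex" and L :: real
  assumes "mono W"
    and "filterlim W at_top sequentially"
    and "bounded (range x)"
    and "(\<lambda>N. W (N - 1) / W N) \<longlonglongrightarrow> L"
    and "0 < L" and "L < 1"
  shows "(\<lambda>N. complex_of_real (1 / W N) * (\<Sum>n=1..N. complex_of_real (W n - W (n - 1)) * x n)
              - (\<Sum>k=0..N. complex_of_real (L ^ k - L ^ (k + 1)) * x (N - k)))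
         \<longlonglongrightarrow> 0"
proof -
  define c where "c N k = (W (N - k) - W (N - Suc k)) / W N" for N k
  define lam where "lam k = L ^ k - L ^ (k + 1)" for k
  define E where "E N = (\<Sum>k<N. \<bar>c N k - lam k\<bar>) + lam N" for N
  obtain B where B: "\<And>n. norm (x n) \<le> B"
    using assms(3) unfolding bounded_iff by auto
  have l0: "lam k \<ge> 0" for k
    unfolding lam_def using assms(5,6) by (simp add: power_decreasing)
  have Elim: "E \<longlonglongrightarrow> 0"
    unfolding E_def c_def lam_def using E_lim[OF assms(1,2,4,5,6)] .
  have eq: "complex_of_real (1 / W N) * (\<Sum>n=1..N. complex_of_real (W n - W (n - 1)) * x n)
              - (\<Sum>k=0..N. complex_of_real (L ^ k - L ^ (k + 1)) * x (N - k))
        = (\<Sum>k<N. complex_of_real (c N k - lam k) * x (N - k)) - complex_of_real (lam N) * x 0" for N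
  proof -
    have a: "complex_of_real (1 / W N) * (\<Sum>n=1..N. complex_of_real (W n - W (n - 1)) * x n)
        = (\<Sum>k<N. complex_of_real (c N k) * x (N - k))"
      unfolding reidx sum_distrib_left
      by (rule sum.cong) (auto simp: c_def Suc_diff_Suc)
    have b: "(\<Sum>k=0..N. complex_of_real (L ^ k - L ^ (k + 1)) * x (N - k))
        = (\<Sum>k<N. complex_of_real (lam k) * x (N - k)) + complex_of_real (lam N) * x 0"
      unfolding atLeast0AtMost lessThan_Suc_atMost[symmetric] sum.lessThan_Suc lam_def by simp
    show ?thesis unfolding a b by (simp add: algebra_simps sum_subtractf)
  qed
  have bound: "norm ((\<Sum>k<N. complex_of_real (c N k - lam k) * x (N - k)) - complex_of_real (lam N) * x 0)
      \<le> B * E N" for N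
  proof -
    have "norm ((\<Sum>k<N. complex_of_real (c N k - lam k) * x (N - k)) - complex_of_real (lam N) * x 0)
       \<le> norm (\<Sum>k<N. complex_of_real (c N k - lam k) * x (N - k)) + norm (complex_of_real (lam N) * x 0)"
      by (rule norm_triangle_ineq4)
    also have "\<dots> \<le> (\<Sum>k<N. \<bar>c N k - lam k\<bar> * B) + lam N * B"
    proof (intro add_mono order.trans[OF norm_sum] sum_mono)
      fix k show "norm (complex_of_real (c N k - lam k) * x (N - k)) \<le> \<bar>c N k - lam k\<bar> * B"
        unfolding norm_mult norm_of_real by (intro mult_left_mono B) auto
    next
      show "norm (complex_of_real (lam N) * x 0) \<le> lam N * B"
        unfolding norm_mult norm_of_real using l0[of N] B[of 0] by (simp add: mult_left_mono)
    qed
    also have "\<dots> = E N * B" unfolding E_def distrib_right sum_distrib_right ..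
    also have "\<dots> = B * E N" by (rule mult.commute)
    finally show ?thesis .
  qed
  have "(\<lambda>N. B * E N) \<longlonglongrightarrow> B * 0" by (intro tendsto_mult tendsto_const Elim)
  then have "(\<lambda>N. B * E N) \<longlonglongrightarrow> 0" by simp
  then show ?thesis unfolding eq by (rule Lim_null_comparison[OF always_eventually[OF allI[OF bound]]])
qed

end
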